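(* Let $M$ be a magma satisfying $xy = xz$ and $(xy)z = xy$ for all $x,y,z\in M$. Then $M$ satisfies $xy = zu$ for all $x,y,z,u\in M$ if and only if $M$ avoids the magma $2_{LZ}$ on $\{0,1\}$ with Cayley table \[ \begin{array}{c|cc} 2_{LZ} & 0 & 1 \\ \hline 0 & 0 & 0 \\ 1 & 1 & 1 \end{array}. \]
   Context: A magma is a nonempty set with a binary operation, written by juxtaposition. A magma $M$ avoids a magma $F$ if no submagma of $M$ is isomorphic to $F$. *)

theory Defs
  imports Main
begin

definition is_submagma :: "'a set \<Rightarrow> 'a set \<Rightarrow> ('a \<Rightarrow> 'a \<Rightarrow> 'a) \<Rightarrow> bool" where
  "is_submagma S M m \<longleftrightarrow> S \<subseteq> M \<and> S \<noteq> {} \<and> (\<forall>x\<in>S. \<forall>y\<in>S. m x y \<in> S)"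

definition magma_iso :: "'b set \<Rightarrow> ('b \<Rightarrow> 'b \<Rightarrow> 'b) \<Rightarrow> 'a set \<Rightarrow> ('a \<Rightarrow> 'a \<Rightarrow> 'a) \<Rightarrow> bool" where
  "magma_iso F f S m \<longleftrightarrow>
     (\<exists>h. bij_betw h F S \<and> (\<forall>x\<in>F. \<forall>y\<in>F. h (f x y) = m (h x) (h y)))"

definition avoids :: "'a set \<Rightarrow> ('a \<Rightarrow> 'a \<Rightarrow> 'a) \<Rightarrow> 'b set \<Rightarrow> ('b \<Rightarrow> 'b \<Rightarrow> 'b) \<Rightarrow> bool" where
  "avoids M m F f \<longleftrightarrow> \<not> (\<exists>S. is_submagma S M m \<and> magma_iso F f S m)"

definition LZ2_carrier :: "nat set" where "LZ2_carrier = {0, 1}"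
definition LZ2_op :: "nat \<Rightarrow> nat \<Rightarrow> nat" where "LZ2_op x y = x"

end

theory Submission
  imports Defs
begin

theorem mainTheorem3:
  fixes m :: "'a \<Rightarrow> 'a \<Rightarrow> 'a"
  assumes "\<forall>x y z. m x y = m x z"
    and "\<forall>x y z. m (m x y) z = m x y"
  shows "(\<forall>x y z u. m x y = m z u) \<longleftrightarrow> avoids UNIV m LZ2_carrier LZ2_op"
proof
  assume c: "\<forall>x y z u. m x y = m z u"
  show "avoids UNIV m LZ2_carrier LZ2_op"
    unfolding avoids_def
  proof
    assume "\<exists>S. is_submagma S UNIV m \<and> magma_iso LZ2_carrier LZ2_op S m"
    then obtain S h where b: "bij_betw h LZ2_carrier S"
      and hh: "\<forall>x\<in>LZ2_carrier. \<forall>y\<in>LZ2_carrier. h (LZ2_op x y) = m (h x) (h y)"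
      unfolding magma_iso_def by blast
    have "h 0 = m (h 0) (h 0)" using hh by (auto simp: LZ2_carrier_def LZ2_op_def)
    moreover have "h 1 = m (h 1) (h 1)" using hh by (auto simp: LZ2_carrier_def LZ2_op_def)
    ultimately have "h 0 = h 1" using c by metis
    moreover have "inj_on h LZ2_carrier" using b bij_betw_def by blast
    ultimately show False by (auto simp: LZ2_carrier_def inj_on_def)
  qed
next
  assume av: "avoids UNIV m LZ2_carrier LZ2_op"
  show "\<forall>x y z u. m x y = m z u"
  proof (rule ccontr)
    assume "\<not> (\<forall>x y z u. m x y = m z u)"
    then obtain x y z u where ne: "m x y \<noteq> m z u" by blast
    define a where "a = m x y"
    define b where "b = m z u"
    have ma: "\<And>w. m a w = a" using assms(2) a_def by simp
    have mb: "\<And>w. m b w = b" using assms(2) b_def by simp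
    have sub: "is_submagma {a, b} UNIV m" unfolding is_submagma_def using ma mb by auto
    define h where "h = (\<lambda>n::nat. if n = 0 then a else b)"
    have "bij_betw h LZ2_carrier {a, b}"
      unfolding bij_betw_def inj_on_def h_def LZ2_carrier_def using ne a_def b_def by auto
    moreover have "\<forall>x\<in>LZ2_carrier. \<forall>y\<in>LZ2_carrier. h (LZ2_op x y) = m (h x) (h y)"
      unfolding LZ2_carrier_def LZ2_op_def h_def using ma mb by auto
    ultimately have "magma_iso LZ2_carrier LZ2_op {a, b} m" unfolding magma_iso_def by blast
    with sub av show False unfolding avoids_def by blast
  qed
qed

end
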